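(* The group of units of a cancellative strongly hyperbolic monoid is a (word) hyperbolic group.
   Context: Directed graphs may have loops and multiple edges; $d(u,v)$ is the length of a shortest directed path from $u$ to $v$ ($\infty$ if none). Out-ball $\overrightarrow{\mathcal{B}}_r(x)=\{y : d(x,y)\le r\}$, in-ball $\overleftarrow{\mathcal{B}}_r(x)=\{y : d(y,x)\le r\}$, extended to sets by union. A path $[x_0,\dots,x_n]$ is a geodesic if $n=d(x_0,x_n)$. A directed geodesic triangle is an ordered triple $(p,q,r)$ of geodesics with the end of $p$ equal to the start of $q$ and $p\circ q$ having the same start and end as $r$; it is $\delta$-thin if every vertex of $r$ lies in $\overrightarrow{\mathcal{B}}_\delta(p)\cup\overleftarrow{\mathcal{B}}_\delta(q)$, every vertex of $p$ lies in $\overrightarrow{\mathcal{B}}_\delta(r)\cup\overleftarrow{\mathcal{B}}_\delta(q)$, and every vertex of $q$ lies in $\overrightarrow{\mathcal{B}}_\delta(p)\cup\overleftarrow{\mathcal{B}}_\delta(r)$. A directed graph is strongly $\delta$-hyperbolic if all its directed geodesic triangles are $\delta$-thin. A monoid is strongly hyperbolic if its right Cayley graph (vertex set the monoid, edge $m\to n$ for each generator $a$ with $ma=n$) w.r.t. some finite generating set is strongly $\delta$-hyperbolic for some $\delta\ge0$. The group of units is the set of $x$ for which some $y$ satisfies $xy=yx=1$. *)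

theory Defs
  imports "HOL-Algebra.Group" "HOL-Algebra.Generated_Groups" "HOL-Library.Extended_Nat"
begin

text \<open>Loops and multiple edges are allowed in the paper; multiplicity of edges does not
  affect paths (as vertex sequences), distances or balls, so an edge relation suffices.\<close>

definition dpath :: "'v set \<Rightarrow> ('v \<Rightarrow> 'v \<Rightarrow> bool) \<Rightarrow> 'v list \<Rightarrow> bool" where
  "dpath V E xs \<longleftrightarrow> xs \<noteq> [] \<and> set xs \<subseteq> V \<and>
     (\<forall>i. Suc i < length xs \<longrightarrow> E (xs ! i) (xs ! Suc i))"

definition ddist :: "'v set \<Rightarrow> ('v \<Rightarrow> 'v \<Rightarrow> bool) \<Rightarrow> 'v \<Rightarrow> 'v \<Rightarrow> enat" where
  "ddist V E x y =
     (if \<exists>xs. dpath V E xs \<and> hd xs = x \<and> last xs = y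
      then enat (LEAST n. \<exists>xs. dpath V E xs \<and> hd xs = x \<and> last xs = y \<and> length xs = Suc n)
      else \<infinity>)"

definition dgeodesic :: "'v set \<Rightarrow> ('v \<Rightarrow> 'v \<Rightarrow> bool) \<Rightarrow> 'v list \<Rightarrow> bool" where
  "dgeodesic V E xs \<longleftrightarrow> dpath V E xs \<and> ddist V E (hd xs) (last xs) = enat (length xs - 1)"

definition out_ball :: "'v set \<Rightarrow> ('v \<Rightarrow> 'v \<Rightarrow> bool) \<Rightarrow> nat \<Rightarrow> 'v set \<Rightarrow> 'v set" where
  "out_ball V E r S = {y \<in> V. \<exists>x\<in>S. ddist V E x y \<le> enat r}"

definition in_ball :: "'v set \<Rightarrow> ('v \<Rightarrow> 'v \<Rightarrow> bool) \<Rightarrow> nat \<Rightarrow> 'v set \<Rightarrow> 'v set" where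
  "in_ball V E r S = {y \<in> V. \<exists>x\<in>S. ddist V E y x \<le> enat r}"

definition geodesic_triangle :: "'v set \<Rightarrow> ('v \<Rightarrow> 'v \<Rightarrow> bool) \<Rightarrow> 'v list \<Rightarrow> 'v list \<Rightarrow> 'v list \<Rightarrow> bool" where
  "geodesic_triangle V E p q r \<longleftrightarrow>
     dgeodesic V E p \<and> dgeodesic V E q \<and> dgeodesic V E r \<and>
     last p = hd q \<and> hd r = hd p \<and> last r = last q"

definition thin_triangle :: "'v set \<Rightarrow> ('v \<Rightarrow> 'v \<Rightarrow> bool) \<Rightarrow> nat \<Rightarrow> 'v list \<Rightarrow> 'v list \<Rightarrow> 'v list \<Rightarrow> bool" where
  "thin_triangle V E \<delta> p q r \<longleftrightarrow>
     set r \<subseteq> out_ball V E \<delta> (set p) \<union> in_ball V E \<delta> (set q) \<and>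
     set p \<subseteq> out_ball V E \<delta> (set r) \<union> in_ball V E \<delta> (set q) \<and>
     set q \<subseteq> out_ball V E \<delta> (set p) \<union> in_ball V E \<delta> (set r)"

definition strongly_hyperbolic_graph :: "'v set \<Rightarrow> ('v \<Rightarrow> 'v \<Rightarrow> bool) \<Rightarrow> nat \<Rightarrow> bool" where
  "strongly_hyperbolic_graph V E \<delta> \<longleftrightarrow>
     (\<forall>p q r. geodesic_triangle V E p q r \<longrightarrow> thin_triangle V E \<delta> p q r)"

definition cayley_edge :: "('a, 'b) monoid_scheme \<Rightarrow> 'a set \<Rightarrow> 'a \<Rightarrow> 'a \<Rightarrow> bool" where
  "cayley_edge M A m n \<longleftrightarrow> m \<in> carrier M \<and> (\<exists>a\<in>A. m \<otimes>\<^bsub>M\<^esub> a = n)"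

definition monoid_generates :: "('a, 'b) monoid_scheme \<Rightarrow> 'a set \<Rightarrow> bool" where
  "monoid_generates M A \<longleftrightarrow> A \<subseteq> carrier M \<and>
     (\<forall>m\<in>carrier M. \<exists>ws. set ws \<subseteq> A \<and> m = foldr (\<lambda>a b. a \<otimes>\<^bsub>M\<^esub> b) ws \<one>\<^bsub>M\<^esub>)"

definition cancellative :: "('a, 'b) monoid_scheme \<Rightarrow> bool" where
  "cancellative M \<longleftrightarrow>
     (\<forall>a\<in>carrier M. \<forall>b\<in>carrier M. \<forall>c\<in>carrier M.
        (a \<otimes>\<^bsub>M\<^esub> b = a \<otimes>\<^bsub>M\<^esub> c \<longrightarrow> b = c) \<and>
        (b \<otimes>\<^bsub>M\<^esub> a = c \<otimes>\<^bsub>M\<^esub> a \<longrightarrow> b = c))"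

definition strongly_hyperbolic_monoid :: "('a, 'b) monoid_scheme \<Rightarrow> bool" where
  "strongly_hyperbolic_monoid M \<longleftrightarrow>
     (\<exists>A \<delta>. finite A \<and> monoid_generates M A \<and>
        strongly_hyperbolic_graph (carrier M) (cayley_edge M A) \<delta>)"

text \<open>For a symmetric
  edge relation the directed thinness condition is exactly the Rips condition.\<close>
definition hyperbolic_group :: "('a, 'b) monoid_scheme \<Rightarrow> bool" where
  "hyperbolic_group G \<longleftrightarrow> group G \<and>
     (\<exists>S \<delta>. finite S \<and> S \<subseteq> carrier G \<and> generate G S = carrier G \<and>
        strongly_hyperbolic_graph (carrier G)
          (cayley_edge G (S \<union> m_inv G ` S)) \<delta>)"

end

theory Submission
  imports Defs
begin


definition geo_d :: "'a set \<Rightarrow> ('a\<Rightarrow>'a\<Rightarrow>nat) \<Rightarrow> 'a \<Rightarrow> 'a \<Rightarrow> 'a list \<Rightarrow> bool" where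
 "geo_d X d x y g \<longleftrightarrow> g \<noteq> [] \<and> hd g = x \<and> last g = y \<and> set g \<subseteq> X \<and>
    (\<forall>i j. i \<le> j \<longrightarrow> j < length g \<longrightarrow> d (g!i) (g!j) = j - i)"

lemma geo_d_hd: "geo_d X d x y g \<Longrightarrow> g!0 = x"
  unfolding geo_d_def by (auto simp: hd_conv_nth)

lemma geo_d_last: "geo_d X d x y g \<Longrightarrow> g!(length g - 1) = y"
  unfolding geo_d_def by (auto simp: last_conv_nth)

lemma geo_d_len: "geo_d X d x y g \<Longrightarrow> d x y = length g - 1"
proof -
  assume a: "geo_d X d x y g"
  then have "d (g!0) (g!(length g - 1)) = length g - 1 - 0"
    unfolding geo_d_def by auto
  then show ?thesis using geo_d_hd[OF a] geo_d_last[OF a] by simp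
qed

lemma geo_d_pos: "geo_d X d x y g \<Longrightarrow> i \<le> j \<Longrightarrow> j < length g \<Longrightarrow> d (g!i) (g!j) = j - i"
  unfolding geo_d_def by auto

lemma geo_d_in: "geo_d X d x y g \<Longrightarrow> i < length g \<Longrightarrow> g!i \<in> X"
  unfolding geo_d_def by auto

lemma geo_d_sub:
  assumes "geo_d X d x y g" "i \<le> j" "j < length g"
  shows "geo_d X d (g!i) (g!j) (take (j-i+1) (drop i g))"
proof -
  let ?h = "take (j-i+1) (drop i g)"
  have len: "length ?h = j - i + 1" using assms by auto
  have nth: "\<And>k. k < length ?h \<Longrightarrow> ?h!k = g!(i+k)" using assms by auto
  show ?thesis unfolding geo_d_def
  proof (intro conjI allI impI)
    show "?h \<noteq> []" using len by auto
    show "hd ?h = g!i" using nth[of 0] len by (simp add: hd_conv_nth)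
    show "last ?h = g!j" using nth[of "j-i"] len assms by (simp add: last_conv_nth)
    show "set ?h \<subseteq> X" using assms(1) unfolding geo_d_def
      by (meson order_trans set_drop_subset set_take_subset)
    fix a b assume "a \<le> b" "b < length ?h"
    then show "d (?h!a) (?h!b) = b - a" using nth[of a] nth[of b] geo_d_pos[OF assms(1), of "i+a" "i+b"] len assms
      by auto
  qed
qed

lemma geo_d_rev:
  assumes "geo_d X d x y g" "\<And>a b. a \<in> X \<Longrightarrow> b \<in> X \<Longrightarrow> d a b = d b a"
  shows "geo_d X d y x (rev g)"
  unfolding geo_d_def
proof (intro conjI allI impI)
  show "rev g \<noteq> []" "hd (rev g) = y" "last (rev g) = x" "set (rev g) \<subseteq> X"
    using assms(1) unfolding geo_d_def by (auto simp: hd_rev last_rev)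
  fix i j assume ij: "i \<le> j" "j < length (rev g)"
  have "rev g ! i = g ! (length g - 1 - i)" "rev g ! j = g ! (length g - 1 - j)"
    using ij by (auto simp: rev_nth)
  moreover have "d (g ! (length g - 1 - j)) (g ! (length g - 1 - i)) = j - i"
    using geo_d_pos[OF assms(1), of "length g - 1 - j" "length g - 1 - i"] ij by auto
  moreover have "g ! (length g - 1 - i) \<in> X" "g ! (length g - 1 - j) \<in> X"
    using geo_d_in[OF assms(1)] ij by auto
  ultimately show "d (rev g ! i) (rev g ! j) = j - i" using assms(2) by metis
qed

lemma geo_d_mem: "geo_d X d x y g \<Longrightarrow> v \<in> set g \<Longrightarrow> \<exists>t < length g. g!t = v \<and> d x v = t \<and> d v y = length g - 1 - t"
proof -
  assume a: "geo_d X d x y g" "v \<in> set g"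
  then obtain t where t: "t < length g" "g!t = v" by (auto simp: in_set_conv_nth)
  have "d (g!0) (g!t) = t" using geo_d_pos[OF a(1), of 0 t] t by auto
  moreover have "d (g!t) (g!(length g - 1)) = length g - 1 - t" using geo_d_pos[OF a(1), of t "length g - 1"] t by auto
  ultimately show ?thesis using t geo_d_hd[OF a(1)] geo_d_last[OF a(1)] by auto
qed


locale morse =
  fixes X :: "'a set" and d :: "'a \<Rightarrow> 'a \<Rightarrow> nat" and \<rho> :: "'a \<Rightarrow> 'a \<Rightarrow> nat" and K \<delta> :: nat
  assumes K_pos: "K \<ge> 1"
  and rho_le_d: "x\<in>X \<Longrightarrow> y\<in>X \<Longrightarrow> \<rho> x y \<le> d x y"
  and d_le_rho: "x\<in>X \<Longrightarrow> y\<in>X \<Longrightarrow> d x y \<le> K * \<rho> x y"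
  and rho_sym: "x\<in>X \<Longrightarrow> y\<in>X \<Longrightarrow> \<rho> x y = \<rho> y x"
  and rho_tri: "x\<in>X \<Longrightarrow> y\<in>X \<Longrightarrow> z\<in>X \<Longrightarrow> \<rho> x z \<le> \<rho> x y + \<rho> y z"
  and d_refl: "x\<in>X \<Longrightarrow> d x x = 0"
  and rho_refl: "x\<in>X \<Longrightarrow> \<rho> x x = 0"
  and geo_ex: "x\<in>X \<Longrightarrow> y\<in>X \<Longrightarrow> \<exists>g. geo_d X d x y g"
  and uge_ex: "x\<in>X \<Longrightarrow> y\<in>X \<Longrightarrow> \<exists>P. geo_d X \<rho> x y P"
  and thin: "geo_d X d x y p \<Longrightarrow> geo_d X d y z q \<Longrightarrow> geo_d X d x z r \<Longrightarrow>
     (\<forall>v\<in>set r. \<exists>u\<in>set p \<union> set q. \<rho> u v \<le> \<delta>) \<and>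
     (\<forall>v\<in>set p. \<exists>u\<in>set r \<union> set q. \<rho> u v \<le> \<delta>) \<and>
     (\<forall>v\<in>set q. \<exists>u\<in>set p \<union> set r. \<rho> u v \<le> \<delta>)"
begin

definition chain :: "'a list \<Rightarrow> bool" where
  "chain cs \<longleftrightarrow> cs \<noteq> [] \<and> set cs \<subseteq> X \<and> (\<forall>i. Suc i < length cs \<longrightarrow> d (cs!i) (cs!Suc i) \<le> K)"

lemma chain_close:
  "chain cs \<Longrightarrow> length cs \<le> 2^k + 1 \<Longrightarrow> geo_d X d (hd cs) (last cs) g \<Longrightarrow> v \<in> set g \<Longrightarrow>
    \<exists>c\<in>set cs. \<rho> v c \<le> k*\<delta> + K"
proof (induction k arbitrary: cs g v)
  case 0
  have cX: "set cs \<subseteq> X" using 0 unfolding chain_def by auto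
  have hX: "hd cs \<in> X" using 0 cX unfolding chain_def by auto
  obtain t where t: "t < length g" "d (hd cs) v = t" "g!t = v"
    using geo_d_mem[OF 0(3,4)] by auto
  have vX: "v \<in> X" using 0(3,4) unfolding geo_d_def by auto
  have dl: "d (hd cs) (last cs) = length g - 1" using geo_d_len[OF 0(3)] .
  have "d (hd cs) (last cs) \<le> K"
  proof (cases "length cs = 1")
    case True
    then have "last cs = hd cs" using 0(1) unfolding chain_def
      by (cases cs) auto
    then show ?thesis using d_refl[OF hX] by simp
  next
    case False
    then have "length cs = 2" using 0(1,2) unfolding chain_def by (cases cs) (auto simp: le_Suc_eq)
    then have "hd cs = cs!0" "last cs = cs!Suc 0" using 0(1) unfolding chain_def
      by (auto simp: hd_conv_nth last_conv_nth)
    then show ?thesis using 0(1) \<open>length cs = 2\<close> unfolding chain_def by auto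
  qed
  then have "\<rho> v (hd cs) \<le> K"
    using rho_le_d[OF hX vX] rho_sym[OF hX vX] t dl by auto
  then show ?case using 0(1) unfolding chain_def by (intro bexI[of _ "hd cs"]) auto
next
  case (Suc k)
  show ?case
  proof (cases "length cs \<le> 2^k + 1")
    case True
    from Suc.IH[OF Suc.prems(1) True Suc.prems(3,4)] obtain c where
      "c \<in> set cs" "\<rho> v c \<le> k*\<delta> + K" by auto
    then show ?thesis by (intro bexI[of _ c]) auto
  next
    case False
    let ?m = "2^k::nat"
    let ?c1 = "take (?m+1) cs" and ?c2 = "drop ?m cs"
    have cX: "set cs \<subseteq> X" using Suc.prems unfolding chain_def by auto
    have lm: "?m < length cs" using False by auto
    have mX: "cs!?m \<in> X" using cX lm by auto
    have hX: "hd cs \<in> X" "last cs \<in> X" using Suc.prems(1) cX unfolding chain_def by auto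
    have ch1: "chain ?c1" using Suc.prems(1) lm unfolding chain_def
      by (auto dest: in_set_takeD)
    have ch2: "chain ?c2" using Suc.prems(1) lm unfolding chain_def
      by (auto dest: in_set_dropD)
    have l1: "length ?c1 \<le> 2^k+1" by simp
    have l2: "length ?c2 \<le> 2^k+1" using Suc.prems(2) by simp
    have h1: "hd ?c1 = hd cs" using lm by (cases cs) auto
    have la1: "last ?c1 = cs!?m"
    proof -
      have "?c1 \<noteq> []" "length ?c1 = ?m + 1" using lm by auto
      then show ?thesis using lm by (simp add: last_conv_nth)
    qed
    have h2: "hd ?c2 = cs!?m" using lm by (simp add: hd_drop_conv_nth)
    have la2: "last ?c2 = last cs" using lm by simp
    obtain g1 where g1: "geo_d X d (hd cs) (cs!?m) g1" using geo_ex[OF hX(1) mX] by auto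
    obtain g2 where g2: "geo_d X d (cs!?m) (last cs) g2" using geo_ex[OF mX hX(2)] by auto
    from thin[OF g1 g2 Suc.prems(3)] Suc.prems(4) obtain u where
      u: "u \<in> set g1 \<union> set g2" "\<rho> u v \<le> \<delta>" by blast
    have uX: "u \<in> X" using u g1 g2 unfolding geo_d_def by auto
    have vX: "v \<in> X" using Suc.prems(3,4) unfolding geo_d_def by auto
    obtain c where c: "c \<in> set cs" "\<rho> u c \<le> k*\<delta> + K"
    proof (cases "u \<in> set g1")
      case True
      from Suc.IH[OF ch1 l1 _ True] g1 h1 la1 obtain c where "c \<in> set ?c1" "\<rho> u c \<le> k*\<delta> + K" by auto
      then show ?thesis using that by (meson in_set_takeD)
    next
      case False
      then have "u \<in> set g2" using u by auto
      from Suc.IH[OF ch2 l2 _ this] g2 h2 la2 obtain c where "c \<in> set ?c2" "\<rho> u c \<le> k*\<delta> + K" by auto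
      then show ?thesis using that by (meson in_set_dropD)
    qed
    have cX': "c \<in> X" using c cX by auto
    have "\<rho> v c \<le> \<rho> v u + \<rho> u c" using rho_tri[OF vX uX cX'] .
    also have "\<dots> \<le> \<delta> + (k*\<delta> + K)" using u(2) c(2) rho_sym[OF uX vX] by simp
    finally show ?thesis using c(1) by (intro bexI[of _ c]) auto
  qed
qed

end


lemma pow2_ge_sq: "m \<ge> 4 \<Longrightarrow> m*m \<le> (2::nat)^m"
proof (induction m rule: dec_induct)
  case base then show ?case by simp
next
  case (step n)
  have "Suc n * Suc n = n*n + 2*n + 1" by simp
  also have "\<dots> \<le> n*n + n*n"
  proof -
    have "4*n \<le> n*n" using step(1) by (intro mult_le_mono1) simp
    moreover have "2*n + 1 \<le> 4*n" using step(1) by simp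
    ultimately show ?thesis by linarith
  qed
  also have "\<dots> \<le> 2^Suc n" using step(3) by simp
  finally show ?case .
qed

lemma lin_le_pow2: "m \<ge> A + C + 4 \<Longrightarrow> A*m + C \<le> (2::nat)^m"
proof -
  assume m: "m \<ge> A + C + 4"
  have "A*m + C \<le> A*m + C*m" using m by simp
  also have "\<dots> = (A+C)*m" by (simp add: algebra_simps)
  also have "\<dots> \<le> m*m" using m by (intro mult_le_mono1) simp
  also have "\<dots> \<le> 2^m" using m by (intro pow2_ge_sq) simp
  finally show ?thesis .
qed

lemma arith_bound: "\<exists>B::nat. \<forall>D::nat. (\<forall>k. c*D \<le> 2^k \<longrightarrow> D \<le> k*\<delta> + K) \<longrightarrow> D \<le> B"
proof -
  define e where "e = \<delta> + 1"
  define N where "N = c*e + c*(e+K) + 4"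
  have key: "\<And>m. m \<ge> N \<Longrightarrow> c*(e*m + e + K) \<le> 2^m"
  proof -
    fix m assume "m \<ge> N"
    then have "(c*e)*m + c*(e+K) \<le> 2^m" unfolding N_def by (intro lin_le_pow2) simp
    then show "c*(e*m + e + K) \<le> 2^m" by (simp add: algebra_simps)
  qed
  show ?thesis
  proof (intro exI allI impI)
    fix D assume H: "\<forall>k. c*D \<le> 2^k \<longrightarrow> D \<le> k*\<delta> + K"
    show "D \<le> K + e*(N+1)"
    proof (rule ccontr)
      assume "\<not> D \<le> K + e*(N+1)"
      then have DK: "D > K + e*(N+1)" by simp
      define m where "m = (D - K) div e"
      have e0: "e > 0" unfolding e_def by simp
      have m1: "e*m \<le> D - K" unfolding m_def by simp
      have m2: "D - K < e*(m+1)"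
      proof -
        have "D - K = e * m + (D-K) mod e" unfolding m_def by simp
        moreover have "(D-K) mod e < e" using e0 by simp
        ultimately show ?thesis by simp
      qed
      have "e*(N+1) < D - K" using DK by simp
      then have "e*(N+1) < e*(m+1)" using m2 by (rule less_trans)
      then have mN: "m \<ge> N" using e0 by (simp only: mult_less_cancel1) simp
      have "D < e*m + e + K" using m2 DK by simp
      then have "c*D \<le> c*(e*m+e+K)" by simp
      also have "\<dots> \<le> 2^m" using key[OF mN] .
      finally have "D \<le> m*\<delta> + K" using H by simp
      moreover have "m*\<delta> + m \<le> D - K" using m1 unfolding e_def by (simp add: algebra_simps)
      moreover have "m \<ge> 1" using mN unfolding N_def by simp
      ultimately show False using DK by linarith
    qed
  qed
qed

context morse begin

lemma chain_append:
  assumes "chain xs" "chain ys" "last xs = hd ys"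
  shows "chain (xs @ tl ys)"
proof -
  have nx: "xs \<noteq> []" and ny: "ys \<noteq> []" using assms unfolding chain_def by auto
  have fm: "\<And>j. j + 1 \<ge> length xs \<Longrightarrow> j + 1 - length xs < length ys \<Longrightarrow> (xs @ tl ys)!j = ys!(j+1-length xs)"
  proof -
    fix j assume j: "j + 1 \<ge> length xs" "j + 1 - length xs < length ys"
    show "(xs @ tl ys)!j = ys!(j+1-length xs)"
    proof (cases "j < length xs")
      case True
      then have "j = length xs - 1" using j by simp
      then have "(xs @ tl ys)!j = last xs" using nx by (simp add: nth_append last_conv_nth)
      then show ?thesis using assms(3) ny \<open>j = length xs - 1\<close> nx by (simp add: hd_conv_nth)
    next
      case False
      then show ?thesis using j ny by (simp add: nth_append nth_tl Suc_diff_le)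
    qed
  qed
  show ?thesis unfolding chain_def
  proof (intro conjI allI impI)
    show "xs @ tl ys \<noteq> []" using nx by simp
    show "set (xs @ tl ys) \<subseteq> X" using assms unfolding chain_def by (auto dest: list.set_sel(2)[rotated])
  next
    fix i assume i: "Suc i < length (xs @ tl ys)"
    show "d ((xs @ tl ys) ! i) ((xs @ tl ys) ! Suc i) \<le> K"
    proof (cases "Suc i < length xs")
      case True
      then show ?thesis using assms(1) unfolding chain_def by (simp add: nth_append)
    next
      case False
      have l: "length (xs @ tl ys) = length xs + length ys - 1" using ny by (cases ys) auto
      have "(xs @ tl ys)!i = ys!(i+1-length xs)" using False i l by (intro fm) auto
      moreover have "(xs @ tl ys)!Suc i = ys!(Suc (i+1-length xs))" using False i l fm[of "Suc i"] by (auto simp: Suc_diff_le)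
      moreover have "Suc (i+1-length xs) < length ys" using False i l by auto
      ultimately show ?thesis using assms(2) unfolding chain_def by auto
    qed
  qed
qed

lemma chain_append_hd: "xs \<noteq> [] \<Longrightarrow> hd (xs @ tl ys) = hd xs" by simp
lemma chain_append_last: "xs \<noteq> [] \<Longrightarrow> ys \<noteq> [] \<Longrightarrow> last xs = hd ys \<Longrightarrow> last (xs @ tl ys) = last ys"
  by (cases ys) auto
lemma chain_append_len: "ys \<noteq> [] \<Longrightarrow> length (xs @ tl ys) = length xs + length ys - 1"
  by (cases ys) auto
lemma chain_append_set: "set (xs @ tl ys) \<subseteq> set xs \<union> set ys"
  by (cases ys) auto

lemma uge_chain: "geo_d X \<rho> x y P \<Longrightarrow> chain P"
  unfolding chain_def
proof (intro conjI allI impI)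
  assume a: "geo_d X \<rho> x y P"
  then show "P \<noteq> []" "set P \<subseteq> X" unfolding geo_d_def by auto
  fix i assume i: "Suc i < length P"
  have "\<rho> (P!i) (P!Suc i) = 1" using geo_d_pos[OF a, of i "Suc i"] i by simp
  then show "d (P ! i) (P ! Suc i) \<le> K" using d_le_rho[of "P!i" "P!Suc i"] geo_d_in[OF a] i by auto
qed

end


context morse begin

lemma geo_rho_rev: "geo_d X \<rho> x y P \<Longrightarrow> geo_d X \<rho> y x (rev P)"
  by (rule geo_d_rev) (auto intro: rho_sym)

lemma geo_first_in: "geo_d X e x y g \<Longrightarrow> x \<in> set g"
  unfolding geo_d_def by auto
lemma geo_last_in: "geo_d X e x y g \<Longrightarrow> y \<in> set g"
  unfolding geo_d_def by auto
lemma geo_X: "geo_d X e x y g \<Longrightarrow> x \<in> X \<and> y \<in> X"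
  unfolding geo_d_def by auto

lemma geo_le_len: "geo_d X e x y g \<Longrightarrow> w \<in> set g \<Longrightarrow> e x w \<le> e x y \<and> e w y \<le> e x y"
  using geo_d_mem[of X e x y g w] geo_d_len[of X e x y g] by auto

lemma P_seg:
  assumes P: "geo_d X \<rho> x y P" and a: "a < length P" and b: "b < length P"
  shows "\<exists>s. geo_d X \<rho> (P!a) (P!b) s \<and> set s \<subseteq> set P"
proof (cases "a \<le> b")
  case True
  show ?thesis using geo_d_sub[OF P True b]
    by (intro exI[of _ "take (b-a+1) (drop a P)"]) (auto dest: in_set_takeD in_set_dropD)
next
  case False
  then have "b \<le> a" by simp
  from geo_rho_rev[OF geo_d_sub[OF P this a]] show ?thesis
    by (intro exI[of _ "rev (take (a-b+1) (drop b P))"]) (auto dest: in_set_takeD in_set_dropD)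
qed

lemma morse1: "\<exists>B. \<forall>x y P g. geo_d X \<rho> x y P \<longrightarrow> geo_d X d x y g \<longrightarrow> (\<forall>v\<in>set g. \<exists>w\<in>set P. \<rho> v w \<le> B)"
proof -
  obtain B where B: "\<And>D. (\<forall>k. (4+4*K)*D \<le> 2^k \<longrightarrow> D \<le> k*\<delta> + K) \<Longrightarrow> D \<le> B"
    using arith_bound[of "4+4*K" \<delta> K] by blast
  show ?thesis
  proof (intro exI allI impI)
    fix x y P g assume P: "geo_d X \<rho> x y P" and g: "geo_d X d x y g"
    have PX: "set P \<subseteq> X" and gX: "set g \<subseteq> X" using P g unfolding geo_d_def by auto
    have Pne: "set P \<noteq> {}" using P unfolding geo_d_def by auto
    define distP where "distP u = Min ((\<rho> u) ` set P)" for u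
    have dP_le: "\<And>u w. w \<in> set P \<Longrightarrow> distP u \<le> \<rho> u w" unfolding distP_def by simp
    have dP_ex: "\<And>u. \<exists>a<length P. \<rho> u (P!a) = distP u"
    proof -
      fix u
      have "distP u \<in> (\<rho> u) ` set P" unfolding distP_def using Pne by (intro Min_in) auto
      then show "\<exists>a<length P. \<rho> u (P!a) = distP u" by (auto simp: in_set_conv_nth)
    qed
    define D where "D = Max (distP ` set g)"
    have gne: "set g \<noteq> {}" using g unfolding geo_d_def by auto
    have D_ge: "\<And>v. v \<in> set g \<Longrightarrow> distP v \<le> D" unfolding D_def by simp
    have "D \<in> distP ` set g" unfolding D_def using gne by (intro Max_in) auto
    then obtain v0 where v0: "v0 \<in> set g" "distP v0 = D" by auto
    have "D \<le> B"
    proof (rule B, intro allI impI)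
      fix k assume hk: "(4+4*K)*D \<le> 2^k"
      obtain t0 where t0: "t0 < length g" "g!t0 = v0" using geo_d_mem[OF g v0(1)] by auto
      define T where "T = length g - 1"
      define s where "s = 2*K*D"
      define ty where "ty = t0 - s"
      define tz where "tz = min (t0+s) T"
      define yy where "yy = g!ty"
      define zz where "zz = g!tz"
      have tT: "t0 \<le> T" "ty \<le> t0" "t0 \<le> tz" "tz \<le> T" "T < length g"
        using t0 unfolding T_def ty_def tz_def by auto
      have v0X: "v0 \<in> X" and yyX: "yy \<in> X" and zzX: "zz \<in> X"
        using gX v0 tT t0 unfolding yy_def zz_def by auto
      have yfar: "2*D \<le> \<rho> v0 yy \<or> yy \<in> set P"
      proof (cases "s \<le> t0")
        case True
        have "d yy v0 = t0 - ty" unfolding yy_def using geo_d_pos[OF g, of ty t0] tT t0 by simp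
        then have "s \<le> K * \<rho> yy v0" using d_le_rho[OF yyX v0X] True unfolding ty_def by simp
        then have "K*(2*D) \<le> K * \<rho> v0 yy" unfolding s_def using rho_sym[OF yyX v0X] by simp
        then show ?thesis using K_pos by simp
      next
        case False
        then have "ty = 0" unfolding ty_def by simp
        then have "yy = x" unfolding yy_def using geo_d_hd[OF g] by simp
        then show ?thesis using geo_first_in[OF P] by simp
      qed
      have zfar: "2*D \<le> \<rho> v0 zz \<or> zz \<in> set P"
      proof (cases "t0 + s \<le> T")
        case True
        then have tz: "tz = t0 + s" unfolding tz_def by simp
        have "d v0 zz = tz - t0" unfolding zz_def using geo_d_pos[OF g, of t0 tz] tT t0 by simp
        then have "s \<le> K * \<rho> v0 zz" using d_le_rho[OF v0X zzX] tz by simp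
        then have "K*(2*D) \<le> K * \<rho> v0 zz" unfolding s_def by simp
        then show ?thesis using K_pos by simp
      next
        case False
        then have "tz = T" unfolding tz_def by simp
        then have "zz = y" unfolding zz_def T_def using geo_d_last[OF g] by simp
        then show ?thesis using geo_last_in[OF P] by simp
      qed
      obtain a where a: "a < length P" "\<rho> yy (P!a) = distP yy" using dP_ex by blast
      obtain b where b: "b < length P" "\<rho> zz (P!b) = distP zz" using dP_ex by blast
      have yyg: "yy \<in> set g" "zz \<in> set g" unfolding yy_def zz_def using tT by auto
      have ea: "\<rho> yy (P!a) \<le> D" using a D_ge[OF yyg(1)] by simp
      have eb: "\<rho> zz (P!b) \<le> D" using b D_ge[OF yyg(2)] by simp
      have PaX: "P!a \<in> X" and PbX: "P!b \<in> X" using PX a b by auto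
      have ea0: "yy \<in> set P \<Longrightarrow> \<rho> yy (P!a) = 0" using a dP_le[of yy yy] rho_refl[OF yyX] by simp
      have eb0: "zz \<in> set P \<Longrightarrow> \<rho> zz (P!b) = 0" using b dP_le[of zz zz] rho_refl[OF zzX] by simp
      have farP: "\<And>w. w \<in> set P \<Longrightarrow> D \<le> \<rho> v0 w" using dP_le v0(2) by metis
      obtain s1 where s1: "geo_d X \<rho> yy (P!a) s1" using uge_ex[OF yyX PaX] by auto
      obtain s2 where s2: "geo_d X \<rho> (P!a) (P!b) s2" "set s2 \<subseteq> set P" using P_seg[OF P a(1) b(1)] by auto
      obtain s3 where s3: "geo_d X \<rho> (P!b) zz s3" using uge_ex[OF PbX zzX] by auto
      have far1: "\<And>w. w \<in> set s1 \<Longrightarrow> D \<le> \<rho> v0 w"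
      proof -
        fix w assume w: "w \<in> set s1"
        have wX: "w \<in> X" using w s1 unfolding geo_d_def by auto
        have "\<rho> yy w \<le> \<rho> yy (P!a)" using geo_le_len[OF s1 w] by simp
        moreover have "\<rho> v0 yy \<le> \<rho> v0 w + \<rho> w yy" using rho_tri[OF v0X wX yyX] .
        moreover have "\<rho> w yy = \<rho> yy w" using rho_sym[OF wX yyX] .
        ultimately show "D \<le> \<rho> v0 w" using yfar ea ea0 farP by fastforce
      qed
      have far3: "\<And>w. w \<in> set s3 \<Longrightarrow> D \<le> \<rho> v0 w"
      proof -
        fix w assume w: "w \<in> set s3"
        have wX: "w \<in> X" using w s3 unfolding geo_d_def by auto
        have "\<rho> w zz \<le> \<rho> (P!b) zz" using geo_le_len[OF s3 w] by simp
        moreover have "\<rho> (P!b) zz = \<rho> zz (P!b)" using rho_sym[OF PbX zzX] .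
        moreover have "\<rho> v0 zz \<le> \<rho> v0 w + \<rho> w zz" using rho_tri[OF v0X wX zzX] .
        ultimately show "D \<le> \<rho> v0 w" using zfar eb eb0 farP by fastforce
      qed
      define cs where "cs = (s1 @ tl s2) @ tl s3"
      have ne: "s1 \<noteq> []" "s2 \<noteq> []" "s3 \<noteq> []" using s1 s2 s3 unfolding geo_d_def by auto
      have l1: "last s1 = hd s2" "last (s1 @ tl s2) = hd s3"
        using s1 s2 s3 ne unfolding geo_d_def by (auto simp: chain_append_last)
      have ch: "chain cs" unfolding cs_def
        by (intro chain_append uge_chain[OF s1] uge_chain[OF s2(1)] uge_chain[OF s3] l1)
      have hcs: "hd cs = yy" unfolding cs_def using ne s1 unfolding geo_d_def by simp
      have lcs: "last cs = zz" unfolding cs_def using ne l1 s3 unfolding geo_d_def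
        by (subst chain_append_last) auto
      have scs: "set cs \<subseteq> set s1 \<union> set P \<union> set s3" unfolding cs_def
        using chain_append_set[of s1 s2] chain_append_set[of "s1 @ tl s2" s3] s2(2) by blast
      have len: "length cs = length s1 + length s2 + length s3 - 2"
        
      proof -
        have "0 < length s2" "0 < length s3" using ne by auto
        then show ?thesis unfolding cs_def using ne by (cases s2; cases s3) auto
      qed
      have len1: "length s1 = \<rho> yy (P!a) + 1" using geo_d_len[OF s1] ne by simp
      have len2: "length s2 = \<rho> (P!a) (P!b) + 1" using geo_d_len[OF s2(1)] ne by simp
      have len3: "length s3 = \<rho> zz (P!b) + 1" using geo_d_len[OF s3] ne rho_sym[OF PbX zzX] by simp
      have dyz: "d yy zz = tz - ty" unfolding yy_def zz_def using geo_d_pos[OF g, of ty tz] tT by simp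
      have "\<rho> (P!a) (P!b) \<le> \<rho> (P!a) yy + \<rho> yy (P!b)" using rho_tri[OF PaX yyX PbX] .
      also have "\<rho> yy (P!b) \<le> \<rho> yy zz + \<rho> zz (P!b)" using rho_tri[OF yyX zzX PbX] .
      also have "\<rho> yy zz \<le> tz - ty" using rho_le_d[OF yyX zzX] dyz by simp
      finally have pab: "\<rho> (P!a) (P!b) \<le> \<rho> yy (P!a) + (tz - ty) + \<rho> zz (P!b)"
        using rho_sym[OF PaX yyX] by simp
      have "tz - ty \<le> 2*s" unfolding tz_def ty_def by simp
      then have "length cs \<le> 4*D + 4*K*D + 1"
        using len len1 len2 len3 pab ea eb unfolding s_def by simp
      also have "\<dots> \<le> 2^k + 1" using hk by (simp add: algebra_simps)
      finally have lk: "length cs \<le> 2^k + 1" .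
      have gg: "geo_d X d yy zz (take (tz-ty+1) (drop ty g))"
        unfolding yy_def zz_def using geo_d_sub[OF g, of ty tz] tT by simp
      have "v0 \<in> set (take (tz-ty+1) (drop ty g))"
      proof -
        have "(take (tz-ty+1) (drop ty g)) ! (t0 - ty) = g!t0" using tT by simp
        moreover have "t0 - ty < length (take (tz-ty+1) (drop ty g))" using tT by simp
        ultimately show ?thesis using t0 by (metis nth_mem)
      qed
      from chain_close[OF ch lk, unfolded hcs lcs, OF gg this] obtain c where
        c: "c \<in> set cs" "\<rho> v0 c \<le> k*\<delta> + K" by auto
      have "D \<le> \<rho> v0 c" using c(1) scs far1 far3 farP by blast
      then show "D \<le> k*\<delta> + K" using c(2) by simp
    qed
    show "\<forall>v\<in>set g. \<exists>w\<in>set P. \<rho> v w \<le> B"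
    proof
      fix v assume "v \<in> set g"
      obtain a where a: "a < length P" "\<rho> v (P!a) = distP v" using dP_ex by blast
      then show "\<exists>w\<in>set P. \<rho> v w \<le> B" using D_ge[OF \<open>v \<in> set g\<close>] \<open>D \<le> B\<close>
        by (intro bexI[of _ "P!a"]) auto
    qed
  qed
qed

end


lemma ivt_nat:
  fixes f :: "nat \<Rightarrow> nat"
  assumes "f 0 = 0" "f T = n" "\<forall>t<T. f (Suc t) \<le> f t + J" "i \<le> n"
  shows "\<exists>t\<le>T. f t \<le> i + J \<and> i \<le> f t + J"
proof -
  define t where "t = (LEAST t. i \<le> f t)"
  have it: "i \<le> f t" unfolding t_def using assms(2,4) by (metis LeastI)
  have tT: "t \<le> T" unfolding t_def using assms(2,4) by (metis Least_le)
  show ?thesis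
  proof (cases t)
    case 0
    then show ?thesis using assms(1) it tT by (intro exI[of _ 0]) auto
  next
    case (Suc t')
    have "\<not> i \<le> f t'" unfolding t_def using Suc by (metis lessI not_less_Least t_def)
    moreover have "f t \<le> f t' + J" using assms(3) Suc tT by auto
    ultimately show ?thesis using it tT by (intro exI[of _ t]) auto
  qed
qed

context morse begin

lemma uge_abs: "geo_d X \<rho> x y P \<Longrightarrow> i < length P \<Longrightarrow> j < length P \<Longrightarrow>
   \<rho> (P!i) (P!j) = (if i \<le> j then j - i else i - j)"
proof -
  assume P: "geo_d X \<rho> x y P" and ij: "i < length P" "j < length P"
  show ?thesis
  proof (cases "i \<le> j")
    case True then show ?thesis using geo_d_pos[OF P True ij(2)] by simp
  next
    case False
    then have "\<rho> (P!j) (P!i) = i - j" using geo_d_pos[OF P, of j i] ij by simp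
    then show ?thesis using False rho_sym[of "P!i" "P!j"] geo_d_in[OF P] ij by simp
  qed
qed

lemma morse2:
  assumes B1: "\<forall>x y P g. geo_d X \<rho> x y P \<longrightarrow> geo_d X d x y g \<longrightarrow> (\<forall>v\<in>set g. \<exists>w\<in>set P. \<rho> v w \<le> B1)"
  shows "\<forall>x y P g. geo_d X \<rho> x y P \<longrightarrow> geo_d X d x y g \<longrightarrow> (\<forall>w\<in>set P. \<exists>v\<in>set g. \<rho> w v \<le> 3*B1+1)"
proof (intro allI impI ballI)
  fix x y P g w assume P: "geo_d X \<rho> x y P" and g: "geo_d X d x y g" and w: "w \<in> set P"
  define n where "n = length P - 1"
  define T where "T = length g - 1"
  have PX: "set P \<subseteq> X" and gX: "set g \<subseteq> X" using P g unfolding geo_d_def by auto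
  have lP: "n < length P" and lg: "T < length g" using P g unfolding geo_d_def n_def T_def by auto
  have xX: "x \<in> X" "y \<in> X" using geo_X[OF P] by auto
  define \<pi> where "\<pi> t = (if t = 0 then 0 else if t = T then n else (SOME j. j < length P \<and> \<rho> (g!t) (P!j) \<le> B1))" for t
  have pi: "\<And>t. t \<le> T \<Longrightarrow> \<pi> t < length P \<and> \<rho> (g!t) (P!(\<pi> t)) \<le> B1"
  proof -
    fix t assume t: "t \<le> T"
    show "\<pi> t < length P \<and> \<rho> (g!t) (P!(\<pi> t)) \<le> B1"
    proof (cases "t = 0")
      case True
      then show ?thesis unfolding \<pi>_def using geo_d_hd[OF P] geo_d_hd[OF g] rho_refl[OF xX(1)] lP by (cases P) auto
    next
      case False
      show ?thesis
      proof (cases "t = T")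
        case True
        then show ?thesis unfolding \<pi>_def using False geo_d_last[OF P] geo_d_last[OF g] rho_refl[OF xX(2)] lP
          unfolding n_def T_def by simp
      next
        case False2: False
        have "g!t \<in> set g" using t lg by simp
        then obtain w' where "w' \<in> set P" "\<rho> (g!t) w' \<le> B1" using B1 P g by blast
        then have ex: "\<exists>j. j < length P \<and> \<rho> (g!t) (P!j) \<le> B1" by (auto simp: in_set_conv_nth)
        show ?thesis unfolding \<pi>_def using False False2 someI_ex[OF ex] by simp
      qed
    qed
  qed
  have piT: "\<pi> T = n"
  proof (cases "T = 0")
    case True
    have "x = y" using geo_d_hd[OF g] geo_d_last[OF g] True unfolding T_def by simp
    then have "n = 0" using geo_d_len[OF P] rho_refl[OF xX(1)] unfolding n_def by simp
    then show ?thesis using True unfolding \<pi>_def by simp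
  qed (simp add: \<pi>_def)
  define J where "J = 2*B1+1"
  have jump: "\<forall>t<T. \<pi> (Suc t) \<le> \<pi> t + J \<and> \<pi> t \<le> \<pi> (Suc t) + J"
  proof (intro allI impI)
    fix t assume t: "t < T"
    have p1: "\<pi> t < length P" "\<rho> (g!t) (P!(\<pi> t)) \<le> B1" using pi[of t] t by auto
    have p2: "\<pi> (Suc t) < length P" "\<rho> (g!Suc t) (P!(\<pi> (Suc t))) \<le> B1" using pi[of "Suc t"] t by auto
    have X1: "g!t \<in> X" "g!Suc t \<in> X" "P!(\<pi> t) \<in> X" "P!(\<pi> (Suc t)) \<in> X" using gX PX p1 p2 t lg by auto
    have "\<rho> (g!t) (g!Suc t) \<le> 1" using rho_le_d[OF X1(1,2)] geo_d_pos[OF g, of t "Suc t"] t lg by simp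
    have "\<rho> (P!(\<pi> t)) (P!(\<pi> (Suc t))) \<le> \<rho> (P!(\<pi> t)) (g!t) + \<rho> (g!t) (P!(\<pi> (Suc t)))"
      using rho_tri X1 by blast
    also have "\<rho> (g!t) (P!(\<pi> (Suc t))) \<le> \<rho> (g!t) (g!Suc t) + \<rho> (g!Suc t) (P!(\<pi> (Suc t)))"
      using rho_tri X1 by blast
    finally have "\<rho> (P!(\<pi> t)) (P!(\<pi> (Suc t))) \<le> J"
      using p1 p2 \<open>\<rho> (g!t) (g!Suc t) \<le> 1\<close> rho_sym[OF X1(1) X1(3)] unfolding J_def by simp
    then show "\<pi> (Suc t) \<le> \<pi> t + J \<and> \<pi> t \<le> \<pi> (Suc t) + J"
      using uge_abs[OF P p1(1) p2(1)] by (auto split: if_splits)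
  qed
  obtain i where i: "i < length P" "P!i = w" using w by (auto simp: in_set_conv_nth)
  have "i \<le> n" using i unfolding n_def by simp
  from ivt_nat[of \<pi> T n J i, OF _ piT _ this] jump obtain t where
    t: "t \<le> T" "\<pi> t \<le> i + J" "i \<le> \<pi> t + J" unfolding \<pi>_def by auto
  have pt: "\<pi> t < length P" "\<rho> (g!t) (P!(\<pi> t)) \<le> B1" using pi[OF t(1)] by auto
  have X2: "g!t \<in> X" "P!(\<pi> t) \<in> X" "w \<in> X" using gX PX pt t(1) lg w by auto
  have "\<rho> w (P!(\<pi> t)) \<le> J" using uge_abs[OF P i(1) pt(1)] i t by auto
  moreover have "\<rho> w (g!t) \<le> \<rho> w (P!(\<pi> t)) + \<rho> (P!(\<pi> t)) (g!t)" using rho_tri X2 by blast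
  ultimately have "\<rho> w (g!t) \<le> 3*B1+1" using pt rho_sym[OF X2(1,2)] unfolding J_def by simp
  then show "\<exists>v\<in>set g. \<rho> w v \<le> 3*B1+1" using t(1) lg by (intro bexI[of _ "g!t"]) auto
qed

lemma final_thin: "\<exists>\<delta>'. \<forall>x y z p q r. geo_d X \<rho> x y p \<longrightarrow> geo_d X \<rho> y z q \<longrightarrow> geo_d X \<rho> x z r \<longrightarrow>
     (\<forall>v\<in>set r. \<exists>u\<in>set p \<union> set q. \<rho> u v \<le> \<delta>') \<and>
     (\<forall>v\<in>set p. \<exists>u\<in>set r \<union> set q. \<rho> u v \<le> \<delta>') \<and>
     (\<forall>v\<in>set q. \<exists>u\<in>set p \<union> set r. \<rho> u v \<le> \<delta>')"
proof -
  obtain B1 where B1: "\<forall>x y P g. geo_d X \<rho> x y P \<longrightarrow> geo_d X d x y g \<longrightarrow> (\<forall>v\<in>set g. \<exists>w\<in>set P. \<rho> v w \<le> B1)"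
    using morse1 by blast
  note H = morse2[OF B1]
  define D' where "D' = (3*B1+1) + \<delta> + B1"
  have side: "\<And>a b S gS a1 b1 S1 g1 a2 b2 S2 g2.
     geo_d X \<rho> a b S \<Longrightarrow> geo_d X d a b gS \<Longrightarrow>
     geo_d X \<rho> a1 b1 S1 \<Longrightarrow> geo_d X d a1 b1 g1 \<Longrightarrow>
     geo_d X \<rho> a2 b2 S2 \<Longrightarrow> geo_d X d a2 b2 g2 \<Longrightarrow>
     (\<forall>w\<in>set gS. \<exists>u\<in>set g1 \<union> set g2. \<rho> u w \<le> \<delta>) \<Longrightarrow>
     (\<forall>v\<in>set S. \<exists>u\<in>set S1 \<union> set S2. \<rho> u v \<le> D')"
  proof (intro ballI)
    fix a b S gS a1 b1 S1 g1 a2 b2 S2 g2 v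
    assume S: "geo_d X \<rho> a b S" and gS: "geo_d X d a b gS"
      and S1: "geo_d X \<rho> a1 b1 S1" and g1: "geo_d X d a1 b1 g1"
      and S2: "geo_d X \<rho> a2 b2 S2" and g2: "geo_d X d a2 b2 g2"
      and th: "\<forall>w\<in>set gS. \<exists>u\<in>set g1 \<union> set g2. \<rho> u w \<le> \<delta>" and v: "v \<in> set S"
    obtain w where w: "w \<in> set gS" "\<rho> v w \<le> 3*B1+1" using H S gS v by blast
    obtain u where u: "u \<in> set g1 \<union> set g2" "\<rho> u w \<le> \<delta>" using th w(1) by blast
    obtain p' where p': "p' \<in> set S1 \<union> set S2" "\<rho> u p' \<le> B1"
      using u(1) B1 S1 g1 S2 g2 by blast
    have X3: "v \<in> X" "w \<in> X" "u \<in> X" "p' \<in> X"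
      using v w(1) u(1) p'(1) S gS g1 g2 S1 S2 unfolding geo_d_def by auto
    have "\<rho> p' v \<le> \<rho> p' u + \<rho> u v" using rho_tri X3 by blast
    also have "\<rho> u v \<le> \<rho> u w + \<rho> w v" using rho_tri X3 by blast
    finally have "\<rho> p' v \<le> B1 + \<delta> + (3*B1+1)"
      using p'(2) u(2) w(2) rho_sym[OF X3(3,4)] rho_sym[OF X3(1,2)] by simp
    then show "\<exists>u\<in>set S1 \<union> set S2. \<rho> u v \<le> D'" using p'(1) unfolding D'_def
      by (intro bexI[of _ p']) auto
  qed
  show ?thesis
  proof (intro exI allI impI)
    fix x y z p q r assume p: "geo_d X \<rho> x y p" and q: "geo_d X \<rho> y z q" and r: "geo_d X \<rho> x z r"
    have X0: "x \<in> X" "y \<in> X" "z \<in> X" using geo_X[OF p] geo_X[OF q] by auto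
    obtain gp where gp: "geo_d X d x y gp" using geo_ex X0 by blast
    obtain gq where gq: "geo_d X d y z gq" using geo_ex X0 by blast
    obtain gr where gr: "geo_d X d x z gr" using geo_ex X0 by blast
    note T = thin[OF gp gq gr]
    show "(\<forall>v\<in>set r. \<exists>u\<in>set p \<union> set q. \<rho> u v \<le> D') \<and>
     (\<forall>v\<in>set p. \<exists>u\<in>set r \<union> set q. \<rho> u v \<le> D') \<and>
     (\<forall>v\<in>set q. \<exists>u\<in>set p \<union> set r. \<rho> u v \<le> D')"
    proof (intro conjI)
      show "\<forall>v\<in>set r. \<exists>u\<in>set p \<union> set q. \<rho> u v \<le> D'" using side[OF r gr p gp q gq] T by blast
      show "\<forall>v\<in>set p. \<exists>u\<in>set r \<union> set q. \<rho> u v \<le> D'" using side[OF p gp r gr q gq] T by blast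
      show "\<forall>v\<in>set q. \<exists>u\<in>set p \<union> set r. \<rho> u v \<le> D'" using side[OF q gq p gp r gr] T by blast
    qed
  qed
qed

end


lemma dpath_append:
  assumes "dpath V E xs" "dpath V E ys" "last xs = hd ys"
  shows "dpath V E (xs @ tl ys)"
proof -
  have nx: "xs \<noteq> []" and ny: "ys \<noteq> []" using assms unfolding dpath_def by auto
  have fm: "\<And>j. j + 1 \<ge> length xs \<Longrightarrow> j + 1 - length xs < length ys \<Longrightarrow> (xs @ tl ys)!j = ys!(j+1-length xs)"
  proof -
    fix j assume j: "j + 1 \<ge> length xs" "j + 1 - length xs < length ys"
    show "(xs @ tl ys)!j = ys!(j+1-length xs)"
    proof (cases "j < length xs")
      case True
      then have "j = length xs - 1" using j by simp
      then have "(xs @ tl ys)!j = last xs" using nx by (simp add: nth_append last_conv_nth)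
      then show ?thesis using assms(3) ny \<open>j = length xs - 1\<close> nx by (simp add: hd_conv_nth)
    next
      case False
      then show ?thesis using j ny by (simp add: nth_append nth_tl Suc_diff_le)
    qed
  qed
  show ?thesis unfolding dpath_def
  proof (intro conjI allI impI)
    show "xs @ tl ys \<noteq> []" using nx by simp
    show "set (xs @ tl ys) \<subseteq> V" using assms unfolding dpath_def by (auto dest: list.set_sel(2)[rotated])
  next
    fix i assume i: "Suc i < length (xs @ tl ys)"
    show "E ((xs @ tl ys) ! i) ((xs @ tl ys) ! Suc i)"
    proof (cases "Suc i < length xs")
      case True
      then show ?thesis using assms(1) unfolding dpath_def by (simp add: nth_append)
    next
      case False
      have l: "length (xs @ tl ys) = length xs + length ys - 1" using ny by (cases ys) auto
      have "(xs @ tl ys)!i = ys!(i+1-length xs)" using False i l by (intro fm) auto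
      moreover have "(xs @ tl ys)!Suc i = ys!(Suc (i+1-length xs))" using False i l fm[of "Suc i"] by (auto simp: Suc_diff_le)
      moreover have "Suc (i+1-length xs) < length ys" using False i l by auto
      ultimately show ?thesis using assms(2) unfolding dpath_def by auto
    qed
  qed
qed

lemma dpath_sub:
  assumes "dpath V E xs" "i \<le> j" "j < length xs"
  shows "dpath V E (take (j-i+1) (drop i xs)) \<and> hd (take (j-i+1) (drop i xs)) = xs!i
     \<and> last (take (j-i+1) (drop i xs)) = xs!j \<and> length (take (j-i+1) (drop i xs)) = j - i + 1"
proof -
  let ?h = "take (j-i+1) (drop i xs)"
  have len: "length ?h = j - i + 1" using assms by auto
  have nth: "\<And>k. k < length ?h \<Longrightarrow> ?h!k = xs!(i+k)" using assms by auto
  have "dpath V E ?h" unfolding dpath_def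
  proof (intro conjI allI impI)
    show "?h \<noteq> []" using len by auto
    show "set ?h \<subseteq> V" using assms(1) unfolding dpath_def
      by (meson order_trans set_drop_subset set_take_subset)
    fix k assume "Suc k < length ?h"
    then show "E (?h!k) (?h!Suc k)" using nth[of k] nth[of "Suc k"] assms(1) len assms unfolding dpath_def
      by auto
  qed
  moreover have "hd ?h = xs!i" using nth[of 0] len by (simp add: hd_conv_nth)
  moreover have "last ?h = xs!j" using nth[of "j-i"] len assms by (simp add: last_conv_nth)
  ultimately show ?thesis using len by simp
qed

lemma ddist_le: "dpath V E xs \<Longrightarrow> ddist V E (hd xs) (last xs) \<le> enat (length xs - 1)"
proof -
  assume a: "dpath V E xs"
  then have ne: "xs \<noteq> []" unfolding dpath_def by auto
  have ex: "\<exists>ys. dpath V E ys \<and> hd ys = hd xs \<and> last ys = last xs \<and> length ys = Suc (length xs - 1)"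
    using a ne by (intro exI[of _ xs]) auto
  then have "(LEAST n. \<exists>ys. dpath V E ys \<and> hd ys = hd xs \<and> last ys = last xs \<and> length ys = Suc n) \<le> length xs - 1"
    by (rule Least_le)
  then show ?thesis unfolding ddist_def using a by auto
qed

lemma ddist_path: "ddist V E x y = enat n \<Longrightarrow> \<exists>xs. dpath V E xs \<and> hd xs = x \<and> last xs = y \<and> length xs = Suc n"
proof -
  assume a: "ddist V E x y = enat n"
  then have ex: "\<exists>xs. dpath V E xs \<and> hd xs = x \<and> last xs = y" unfolding ddist_def by (auto split: if_splits)
  then have n: "n = (LEAST n. \<exists>xs. dpath V E xs \<and> hd xs = x \<and> last xs = y \<and> length xs = Suc n)"
    using a unfolding ddist_def by auto
  from ex obtain xs where xs: "dpath V E xs" "hd xs = x" "last xs = y" by auto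
  then have "\<exists>m xs. dpath V E xs \<and> hd xs = x \<and> last xs = y \<and> length xs = Suc m"
    unfolding dpath_def by (intro exI[of _ "length xs - 1"] exI[of _ xs]) auto
  from LeastI_ex[OF this] show ?thesis unfolding n[symmetric] .
qed

lemma ddist_tri: "ddist V E x z \<le> ddist V E x y + ddist V E y z"
proof (cases "ddist V E x y = \<infinity> \<or> ddist V E y z = \<infinity>")
  case True then show ?thesis by auto
next
  case False
  then obtain n m where nm: "ddist V E x y = enat n" "ddist V E y z = enat m" by auto
  obtain xs where xs: "dpath V E xs" "hd xs = x" "last xs = y" "length xs = Suc n" using ddist_path[OF nm(1)] by auto
  obtain ys where ys: "dpath V E ys" "hd ys = y" "last ys = z" "length ys = Suc m" using ddist_path[OF nm(2)] by auto
  have p: "dpath V E (xs @ tl ys)" using dpath_append[OF xs(1) ys(1)] xs ys by simp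
  have "hd (xs @ tl ys) = x" using xs by (cases xs) auto
  moreover have "last (xs @ tl ys) = z" using xs ys by (cases ys) auto
  moreover have "length (xs @ tl ys) = Suc (n + m)" using xs ys by (cases ys) auto
  ultimately show ?thesis using ddist_le[OF p] nm by simp
qed

lemma ddist_refl: "x \<in> V \<Longrightarrow> ddist V E x x = 0"
proof -
  assume "x \<in> V"
  then have "ddist V E x x \<le> enat 0" using ddist_le[of V E "[x]"] unfolding dpath_def by simp
  then show ?thesis by (simp add: zero_enat_def[symmetric])
qed

lemma ddist_edge: "E x y \<Longrightarrow> x \<in> V \<Longrightarrow> y \<in> V \<Longrightarrow> ddist V E x y \<le> 1"
  using ddist_le[of V E "[x,y]"] unfolding dpath_def by (simp add: one_enat_def less_Suc_eq)

lemma ddist_one: "ddist V E x y = enat 1 \<Longrightarrow> E x y"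
proof -
  assume "ddist V E x y = enat 1"
  from ddist_path[OF this] obtain xs where xs: "dpath V E xs" "hd xs = x" "last xs = y" "length xs = 2" by auto
  have ne: "xs \<noteq> []" using xs(4) by auto
  have "hd xs = xs!0" "last xs = xs!1" using xs(4) hd_conv_nth[OF ne] last_conv_nth[OF ne] by auto
  moreover have "E (xs!0) (xs!Suc 0)" using xs(1,4) unfolding dpath_def by auto
  ultimately show ?thesis using xs by simp
qed

lemma dgeo_ex: "ddist V E x y = enat n \<Longrightarrow> \<exists>g. dgeodesic V E g \<and> hd g = x \<and> last g = y"
proof -
  assume a: "ddist V E x y = enat n"
  from ddist_path[OF a] obtain xs where "dpath V E xs" "hd xs = x" "last xs = y" "length xs = Suc n" by auto
  then show ?thesis using a unfolding dgeodesic_def by (intro exI[of _ xs]) auto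
qed

lemma dgeo_pos:
  assumes g: "dgeodesic V E g" and ij: "i \<le> j" "j < length g"
  shows "ddist V E (g!i) (g!j) = enat (j - i)"
proof -
  have p: "dpath V E g" and dl: "ddist V E (hd g) (last g) = enat (length g - 1)" using g unfolding dgeodesic_def by auto
  have ne: "g \<noteq> []" using p unfolding dpath_def by auto
  have le: "\<And>a b. a \<le> b \<Longrightarrow> b < length g \<Longrightarrow> ddist V E (g!a) (g!b) \<le> enat (b - a)"
  proof -
    fix a b assume ab: "a \<le> b" "b < length g"
    note h = dpath_sub[OF p ab]
    from ddist_le[of V E "take (b-a+1) (drop a g)"] h show "ddist V E (g!a) (g!b) \<le> enat (b - a)" by simp
  qed
  show ?thesis
  proof (rule ccontr)
    assume "ddist V E (g!i) (g!j) \<noteq> enat (j - i)"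
    then have lt: "ddist V E (g!i) (g!j) < enat (j - i)" using le[OF ij] by simp
    have "ddist V E (g!0) (g!(length g - 1)) \<le> ddist V E (g!0) (g!i) + ddist V E (g!i) (g!(length g - 1))"
      by (rule ddist_tri)
    also have "\<dots> \<le> ddist V E (g!0) (g!i) + (ddist V E (g!i) (g!j) + ddist V E (g!j) (g!(length g - 1)))"
      by (intro add_left_mono ddist_tri)
    also have "\<dots> < enat i + (enat (j - i) + enat (length g - 1 - j))"
    proof -
      have a1: "ddist V E (g!0) (g!i) \<le> enat i" using le[of 0 i] ij by simp
      have a3: "ddist V E (g!j) (g!(length g - 1)) \<le> enat (length g - 1 - j)" using le[of j "length g - 1"] ij by simp
      from lt obtain m where m: "ddist V E (g!i) (g!j) = enat m" "m < j - i" by (cases "ddist V E (g!i) (g!j)") auto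
      from a1 obtain m1 where m1: "ddist V E (g!0) (g!i) = enat m1" "m1 \<le> i" by (cases "ddist V E (g!0) (g!i)") auto
      from a3 obtain m3 where m3: "ddist V E (g!j) (g!(length g - 1)) = enat m3" "m3 \<le> length g - 1 - j"
        by (cases "ddist V E (g!j) (g!(length g - 1))") auto
      show ?thesis using m m1 m3 by simp
    qed
    also have "\<dots> = enat (length g - 1)" using ij by simp
    finally show False using dl ne by (simp add: hd_conv_nth last_conv_nth)
  qed
qed

lemma dgeo_of_pos:
  assumes "g \<noteq> []" "set g \<subseteq> V" "\<forall>i j. i \<le> j \<longrightarrow> j < length g \<longrightarrow> ddist V E (g!i) (g!j) = enat (j - i)"
  shows "dgeodesic V E g"
  unfolding dgeodesic_def dpath_def
proof (intro conjI allI impI)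
  show "g \<noteq> []" "set g \<subseteq> V" using assms by auto
  fix i assume "Suc i < length g"
  then show "E (g ! i) (g ! Suc i)" using assms(3) ddist_one[of V E "g!i" "g!Suc i"] by auto
next
  show "ddist V E (hd g) (last g) = enat (length g - 1)"
    using assms(3)[rule_format, of 0 "length g - 1"] assms(1) by (simp add: hd_conv_nth last_conv_nth)
qed

lemma ddist_sym:
  assumes "\<And>a b. E a b \<Longrightarrow> E b a"
  shows "ddist V E x y \<le> ddist V E y x"
proof (cases "ddist V E y x")
  case (enat n)
  from ddist_path[OF this] obtain xs where xs: "dpath V E xs" "hd xs = y" "last xs = x" "length xs = Suc n" by auto
  have "dpath V E (rev xs)" unfolding dpath_def
  proof (intro conjI allI impI)
    show "rev xs \<noteq> []" "set (rev xs) \<subseteq> V" using xs(1) unfolding dpath_def by auto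
    fix i assume i: "Suc i < length (rev xs)"
    define k where "k = length xs - 2 - i"
    have k: "Suc k < length xs" "rev xs ! i = xs ! Suc k" "rev xs ! Suc i = xs ! k"
      using i unfolding k_def by (auto simp: rev_nth Suc_diff_Suc numeral_2_eq_2)
    have "E (xs!k) (xs!Suc k)" using xs(1) k(1) unfolding dpath_def by auto
    then show "E (rev xs ! i) (rev xs ! Suc i)" using assms k by simp
  qed
  from ddist_le[OF this] show ?thesis using xs enat by (simp add: hd_rev last_rev)
qed simp


lemma (in monoid) unit_factor:
  assumes c: "cancellative G" and xy: "x \<in> carrier G" "y \<in> carrier G" "x \<otimes> y \<in> Units G"
  shows "x \<in> Units G \<and> y \<in> Units G"
proof -
  define w where "w = inv (x \<otimes> y)"
  have wc: "w \<in> carrier G" unfolding w_def using xy(3) by (rule Units_inv_closed)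
  have ywc: "y \<otimes> w \<in> carrier G" using xy(2) wc by (rule m_closed)
  have r0: "(x \<otimes> y) \<otimes> w = \<one>" unfolding w_def using xy(3) by (rule Units_r_inv)
  have r: "x \<otimes> (y \<otimes> w) = \<one>" using r0 m_assoc[OF xy(1,2) wc] by simp
  have "x \<otimes> ((y \<otimes> w) \<otimes> x) = (x \<otimes> (y \<otimes> w)) \<otimes> x" using m_assoc[OF xy(1) ywc xy(1)] by simp
  also have "\<dots> = x \<otimes> \<one>" using r xy(1) by simp
  finally have e: "x \<otimes> ((y \<otimes> w) \<otimes> x) = x \<otimes> \<one>" .
  have l: "(y \<otimes> w) \<otimes> x = \<one>" using c xy(1) ywc e unfolding cancellative_def
    by (meson m_closed one_closed)
  have xu: "x \<in> Units G" unfolding Units_def using r l xy(1) ywc by blast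
  have "inv x \<otimes> (x \<otimes> y) = (inv x \<otimes> x) \<otimes> y" using m_assoc[OF Units_inv_closed[OF xu] xy(1,2)] by simp
  also have "\<dots> = y" using xu xy by simp
  finally have ye: "inv x \<otimes> (x \<otimes> y) = y" .
  have "inv x \<otimes> (x \<otimes> y) \<in> Units G" by (rule Units_m_closed[OF Units_inv_Units[OF xu] xy(3)])
  then have "y \<in> Units G" unfolding ye .
  then show ?thesis using xu by simp
qed

lemma (in monoid) foldr_closed: "set ws \<subseteq> carrier G \<Longrightarrow> foldr (\<lambda>a b. a \<otimes> b) ws \<one> \<in> carrier G"
  by (induction ws) auto

lemma (in monoid) path_reach:
  assumes p: "dpath (carrier G) (cayley_edge G A) xs" and A: "A \<subseteq> carrier G" and i: "i < length xs"
  shows "\<exists>c\<in>carrier G. last xs = xs!i \<otimes> c"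
proof -
  have ne: "xs \<noteq> []" and sc: "set xs \<subseteq> carrier G" using p unfolding dpath_def by auto
  have "\<forall>i. length xs - 1 - i = k \<longrightarrow> i < length xs \<longrightarrow> (\<exists>c\<in>carrier G. last xs = xs!i \<otimes> c)" for k
  proof (induction k)
    case 0
    show ?case
    proof (intro allI impI)
      fix i assume "length xs - 1 - i = 0" "i < length xs"
      then have "i = length xs - 1" by simp
      moreover have "xs!i \<in> carrier G" using sc \<open>i < length xs\<close> by auto
      ultimately show "\<exists>c\<in>carrier G. last xs = xs!i \<otimes> c" using ne
        by (intro bexI[of _ \<one>]) (auto simp: last_conv_nth)
    qed
  next
    case (Suc k)
    show ?case
    proof (intro allI impI)
      fix i assume h: "length xs - 1 - i = Suc k" "i < length xs"
      then have si: "Suc i < length xs" by simp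
      have "length xs - 1 - Suc i = k" using h by simp
      from Suc.IH[rule_format, OF this si] obtain c where c: "c \<in> carrier G" "last xs = xs!Suc i \<otimes> c" by auto
      have "cayley_edge G A (xs!i) (xs!Suc i)" using p si unfolding dpath_def by auto
      then obtain a where a: "a \<in> A" "xs!i \<otimes> a = xs!Suc i" unfolding cayley_edge_def by auto
      have xi: "xs!i \<in> carrier G" using sc h by auto
      have ac: "a \<in> carrier G" using a A by auto
      have "last xs = xs!i \<otimes> (a \<otimes> c)" using c(2) a(2) xi ac c(1) by (simp add: m_assoc[symmetric])
      then show "\<exists>c\<in>carrier G. last xs = xs!i \<otimes> c" using ac c by auto
    qed
  qed
  then show ?thesis using i by blast
qed

lemma (in monoid) path_units:
  assumes p: "dpath (carrier G) (cayley_edge G A) xs" and A: "A \<subseteq> carrier G" and c: "cancellative G"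
    and l: "last xs \<in> Units G"
  shows "set xs \<subseteq> Units G"
proof
  fix v assume "v \<in> set xs"
  then obtain i where i: "i < length xs" "xs!i = v" by (auto simp: in_set_conv_nth)
  from path_reach[OF p A i(1)] obtain e where e: "e \<in> carrier G" "last xs = xs!i \<otimes> e" by blast
  have xi: "xs!i \<in> carrier G" using p i(1) unfolding dpath_def by auto
  have "xs!i \<otimes> e \<in> Units G" using l e(2) by simp
  from unit_factor[OF c xi e(1) this] show "v \<in> Units G" using i(2) by simp
qed

lemma (in monoid) word_dist:
  assumes A: "A \<subseteq> carrier G"
  shows "u \<in> carrier G \<Longrightarrow> set ws \<subseteq> A \<Longrightarrow>
    ddist (carrier G) (cayley_edge G A) u (u \<otimes> foldr (\<lambda>a b. a \<otimes> b) ws \<one>) \<le> enat (length ws)"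
proof (induction ws arbitrary: u)
  case Nil
  then show ?case using ddist_refl[of u "carrier G" "cayley_edge G A"] by (simp add: zero_enat_def)
next
  case (Cons a ws)
  have ac: "a \<in> carrier G" using Cons A by auto
  have rc: "foldr (\<lambda>a b. a \<otimes> b) ws \<one> \<in> carrier G" using Cons A by (intro foldr_closed) auto
  have ua: "u \<otimes> a \<in> carrier G" using ac Cons by simp
  have e: "ddist (carrier G) (cayley_edge G A) u (u \<otimes> a) \<le> 1"
    using Cons ac ua by (intro ddist_edge) (auto simp: cayley_edge_def)
  have eq: "u \<otimes> foldr (\<lambda>a b. a \<otimes> b) (a # ws) \<one> = (u \<otimes> a) \<otimes> foldr (\<lambda>a b. a \<otimes> b) ws \<one>"
    using m_assoc[OF Cons.prems(1) ac rc] by simp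
  have "ddist (carrier G) (cayley_edge G A) u (u \<otimes> foldr (\<lambda>a b. a \<otimes> b) (a # ws) \<one>)
     \<le> ddist (carrier G) (cayley_edge G A) u (u \<otimes> a) + ddist (carrier G) (cayley_edge G A) (u \<otimes> a) ((u \<otimes> a) \<otimes> foldr (\<lambda>a b. a \<otimes> b) ws \<one>)"
    unfolding eq by (rule ddist_tri)
  also have "\<dots> \<le> 1 + enat (length ws)" using e Cons.IH[OF ua] Cons.prems(2) by (intro add_mono) auto
  also have "1 + enat (length ws) = enat (length (a#ws))" by (simp add: one_enat_def)
  finally show ?case .
qed


locale conc = monoid G for G :: "('a, 'b) monoid_scheme" (structure) +
  fixes A :: "'a set" and \<delta> :: nat
  assumes canc: "cancellative G" and finA: "finite A" and gen: "monoid_generates G A"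
    and hyp: "strongly_hyperbolic_graph (carrier G) (cayley_edge G A) \<delta>"
begin

abbreviation "EM \<equiv> cayley_edge G A"
abbreviation "VM \<equiv> carrier G"
abbreviation "U \<equiv> Units G"
definition "S = A \<inter> Units G"
definition "T = S \<union> m_inv (units_of G) ` S"
abbreviation "EU \<equiv> cayley_edge (units_of G) T"
definition "dM x y = the_enat (ddist VM EM x y)"
definition "rU x y = the_enat (ddist U EU x y)"

lemma A_sub: "A \<subseteq> carrier G" using gen unfolding monoid_generates_def by auto

lemma word: "m \<in> carrier G \<Longrightarrow> \<exists>ws. set ws \<subseteq> A \<and> m = foldr (\<lambda>a b. a \<otimes> b) ws \<one>"
  using gen unfolding monoid_generates_def by auto

lemma U_sub: "U \<subseteq> VM" by (auto simp: Units_def)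

lemma dM_fin: "x \<in> U \<Longrightarrow> y \<in> U \<Longrightarrow> ddist VM EM x y = enat (dM x y)"
proof -
  assume x: "x \<in> U" and y: "y \<in> U"
  have c: "inv x \<otimes> y \<in> carrier G" using x y by (auto intro: m_closed simp: Units_def)
  obtain ws where ws: "set ws \<subseteq> A" "inv x \<otimes> y = foldr (\<lambda>a b. a \<otimes> b) ws \<one>" using word[OF c] by auto
  have xc: "x \<in> carrier G" "y \<in> carrier G" using x y U_sub by auto
  have "x \<otimes> (inv x \<otimes> y) = y" using x xc by (simp add: m_assoc[symmetric])
  then have "ddist VM EM x y \<le> enat (length ws)" using word_dist[OF A_sub xc(1) ws(1)] ws(2) by simp
  then show ?thesis unfolding dM_def by (cases "ddist VM EM x y") auto
qed

lemma inv_units_of: "s \<in> U \<Longrightarrow> m_inv (units_of G) s = inv s"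
  by (rule units_of_inv)

lemma T_sub: "T \<subseteq> U" unfolding T_def S_def using inv_units_of by auto

lemma EU_iff: "EU u v \<longleftrightarrow> u \<in> U \<and> (\<exists>a\<in>T. u \<otimes> a = v)"
  unfolding cayley_edge_def by (simp add: units_of_carrier units_of_mult)

lemma EU_sym: "EU u v \<Longrightarrow> EU v u"
proof -
  assume "EU u v"
  then obtain a where a: "u \<in> U" "a \<in> T" "u \<otimes> a = v" using EU_iff by auto
  have aU: "a \<in> U" using a T_sub by auto
  have vU: "v \<in> U" using a aU by auto
  have uc: "u \<in> carrier G" and ac: "a \<in> carrier G" using a(1) aU U_sub by auto
  have "v \<otimes> inv a = u \<otimes> (a \<otimes> inv a)" using a(3)[symmetric] m_assoc[OF uc ac Units_inv_closed[OF aU]] by simp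
  also have "\<dots> = u" using aU uc by simp
  finally have "v \<otimes> inv a = u" .
  moreover have "inv a \<in> T"
  proof (cases "a \<in> S")
    case True
    have "inv a = m_inv (units_of G) a" using inv_units_of[OF aU] by simp
    then show ?thesis using True unfolding T_def by blast
  next
    case False
    then obtain s where s: "s \<in> S" "a = m_inv (units_of G) s" using a(2) unfolding T_def by auto
    have "s \<in> U" using s unfolding S_def by auto
    then have "inv a = s" using s inv_units_of by simp
    then show ?thesis using s unfolding T_def by auto
  qed
  ultimately show "EU v u" using vU EU_iff by auto
qed

lemma path_conv:
  assumes p: "dpath VM EM xs" and l: "last xs \<in> U"
  shows "dpath U EU xs"
proof -
  have su: "set xs \<subseteq> U" by (rule path_units[OF p A_sub canc l])
  show ?thesis unfolding dpath_def
  proof (intro conjI allI impI)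
    show "xs \<noteq> []" using p unfolding dpath_def by auto
    show "set xs \<subseteq> U" by (rule su)
    fix i assume i: "Suc i < length xs"
    have e: "EM (xs!i) (xs!Suc i)" using p i unfolding dpath_def by auto
    then obtain a where a: "a \<in> A" "xs!i \<otimes> a = xs!Suc i" unfolding cayley_edge_def by auto
    have u1: "xs!i \<in> U" "xs!Suc i \<in> U" using su i by auto
    have ac: "a \<in> carrier G" using a A_sub by auto
    have xic: "xs!i \<in> carrier G" using u1 U_sub by auto
    have "xs!i \<otimes> a \<in> U" using a(2) u1(2) by simp
    from unit_factor[OF canc xic ac this] have "a \<in> U" by simp
    then have "a \<in> T" unfolding T_def S_def using a by auto
    then show "EU (xs!i) (xs!Suc i)" using EU_iff u1 a by auto
  qed
qed

lemma rU_le: "x \<in> U \<Longrightarrow> y \<in> U \<Longrightarrow> ddist U EU x y \<le> ddist VM EM x y"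
proof -
  assume x: "x \<in> U" and y: "y \<in> U"
  obtain xs where xs: "dpath VM EM xs" "hd xs = x" "last xs = y" "length xs = Suc (dM x y)"
    using ddist_path[OF dM_fin[OF x y]] by auto
  have "dpath U EU xs" using path_conv xs y by simp
  from ddist_le[OF this] show ?thesis using xs dM_fin[OF x y] by simp
qed

lemma rU_fin: "x \<in> U \<Longrightarrow> y \<in> U \<Longrightarrow> ddist U EU x y = enat (rU x y)"
proof -
  assume x: "x \<in> U" and y: "y \<in> U"
  have "ddist U EU x y \<le> enat (dM x y)" using rU_le[OF x y] dM_fin[OF x y] by simp
  then show ?thesis unfolding rU_def by (cases "ddist U EU x y") auto
qed

lemma rU_le_dM: "x \<in> U \<Longrightarrow> y \<in> U \<Longrightarrow> rU x y \<le> dM x y"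
  using rU_le[of x y] rU_fin[of x y] dM_fin[of x y] by simp

lemma K_ex: "\<exists>K\<ge>1. \<forall>u\<in>VM. \<forall>a\<in>T. ddist VM EM u (u \<otimes> a) \<le> enat K"
proof -
  have "\<forall>s\<in>S. \<exists>ws. set ws \<subseteq> A \<and> inv s = foldr (\<lambda>a b. a \<otimes> b) ws \<one>"
  proof
    fix s assume "s \<in> S"
    then have "s \<in> U" unfolding S_def by simp
    then have "inv s \<in> carrier G" by (rule Units_inv_closed)
    then show "\<exists>ws. set ws \<subseteq> A \<and> inv s = foldr (\<lambda>a b. a \<otimes> b) ws \<one>" by (rule word)
  qed
  from bchoice[OF this] obtain f where f0: "\<forall>s\<in>S. set (f s) \<subseteq> A \<and> inv s = foldr (\<lambda>a b. a \<otimes> b) (f s) \<one>"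
    by blast
  then have f: "\<And>s. s \<in> S \<Longrightarrow> set (f s) \<subseteq> A \<and> inv s = foldr (\<lambda>a b. a \<otimes> b) (f s) \<one>" by blast
  define K where "K = Max (insert 1 ((\<lambda>s. length (f s)) ` S))"
  have finS: "finite S" unfolding S_def using finA by auto
  have K1: "1 \<le> K" unfolding K_def using finS by simp
  have Kf: "\<And>s. s \<in> S \<Longrightarrow> length (f s) \<le> K" unfolding K_def using finS by simp
  show ?thesis
  proof (intro exI conjI ballI)
    show "1 \<le> K" by (rule K1)
    fix u a assume u: "u \<in> VM" and a: "a \<in> T"
    show "ddist VM EM u (u \<otimes> a) \<le> enat K"
    proof (cases "a \<in> S")
      case True
      then have "a \<in> A" "a \<in> carrier G" unfolding S_def using A_sub by auto
      then have "ddist VM EM u (u \<otimes> a) \<le> 1" using u by (intro ddist_edge) (auto simp: cayley_edge_def)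
      moreover have "(1::enat) \<le> enat K" using K1 by (simp add: one_enat_def)
      ultimately show ?thesis by (rule order_trans)
    next
      case False
      then obtain s where s: "s \<in> S" "a = m_inv (units_of G) s" using a unfolding T_def by auto
      have "a = inv s" using s inv_units_of unfolding S_def by auto
      then have "a = foldr (\<lambda>a b. a \<otimes> b) (f s) \<one>" using f[OF s(1)] by simp
      then have "ddist VM EM u (u \<otimes> a) \<le> enat (length (f s))" using word_dist[OF A_sub u] f[OF s(1)] by simp
      also have "\<dots> \<le> enat K" using Kf[OF s(1)] by simp
      finally show ?thesis .
    qed
  qed
qed

end


lemma dpath_tl: "dpath V E (a # b # xs) \<Longrightarrow> dpath V E (b # xs) \<and> E a b \<and> a \<in> V"
  unfolding dpath_def
proof (intro conjI allI impI)
  assume h: "a # b # xs \<noteq> [] \<and> set (a # b # xs) \<subseteq> V \<and> (\<forall>i. Suc i < length (a # b # xs) \<longrightarrow> E ((a # b # xs) ! i) ((a # b # xs) ! Suc i))"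
  show "b # xs \<noteq> []" by simp
  show "set (b # xs) \<subseteq> V" "a \<in> V" using h by auto
  show "E a b" using h[THEN conjunct2, THEN conjunct2, rule_format, of 0] by simp
  fix i assume "Suc i < length (b # xs)"
  then show "E ((b # xs) ! i) ((b # xs) ! Suc i)" using h[THEN conjunct2, THEN conjunct2, rule_format, of "Suc i"] by simp
qed

lemma geo_hd_last: "geo_d X d x y g \<Longrightarrow> hd g = x \<and> last g = y"
  unfolding geo_d_def by blast
lemma geo_set: "geo_d X d x y g \<Longrightarrow> set g \<subseteq> X"
  unfolding geo_d_def by blast

context conc begin

lemma pathK:
  assumes K: "\<forall>u\<in>VM. \<forall>a\<in>T. ddist VM EM u (u \<otimes> a) \<le> enat K"
  shows "dpath U EU xs \<Longrightarrow> ddist VM EM (hd xs) (last xs) \<le> enat (K * (length xs - 1))"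
proof (induction xs rule: induct_list012)
  case 1 then show ?case unfolding dpath_def by simp
next
  case (2 a)
  then have "a \<in> VM" using U_sub unfolding dpath_def by auto
  then show ?case using ddist_refl[of a VM EM] by (simp add: zero_enat_def)
next
  case (3 a b xs)
  note h = dpath_tl[OF 3(3)]
  have IH: "ddist VM EM b (last (b # xs)) \<le> enat (K * length xs)" using 3(2) h by simp
  obtain t where t: "t \<in> T" "a \<otimes> t = b" using h EU_iff by auto
  have aV: "a \<in> VM" using h U_sub by auto
  have ab: "ddist VM EM a b \<le> enat K" using K aV t by auto
  have "ddist VM EM a (last (b # xs)) \<le> ddist VM EM a b + ddist VM EM b (last (b # xs))" by (rule ddist_tri)
  also have "\<dots> \<le> enat K + enat (K * length xs)" using ab IH by (rule add_mono)
  also have "\<dots> = enat (K * (length (a # b # xs) - 1))" by (simp add: algebra_simps)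
  finally show ?case by simp
qed

lemma to_geo_M:
  assumes g: "dgeodesic VM EM g" and l: "last g \<in> U"
  shows "geo_d U dM (hd g) (last g) g"
proof -
  have p: "dpath VM EM g" using g unfolding dgeodesic_def by auto
  have su: "set g \<subseteq> U" by (rule path_units[OF p A_sub canc l])
  show ?thesis unfolding geo_d_def
  proof (intro conjI allI impI)
    show "g \<noteq> []" "set g \<subseteq> U" using p su unfolding dpath_def by auto
    show "hd g = hd g" "last g = last g" by auto
    fix i j assume "i \<le> j" "j < length g"
    then show "dM (g!i) (g!j) = j - i" using dgeo_pos[OF g] unfolding dM_def by simp
  qed
qed

lemma to_geo_U:
  assumes g: "dgeodesic U EU g"
  shows "geo_d U rU (hd g) (last g) g"
proof -
  have p: "dpath U EU g" using g unfolding dgeodesic_def by auto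
  show ?thesis unfolding geo_d_def
  proof (intro conjI allI impI)
    show "g \<noteq> []" "set g \<subseteq> U" using p unfolding dpath_def by auto
    fix i j assume "i \<le> j" "j < length g"
    then show "rU (g!i) (g!j) = j - i" using dgeo_pos[OF g] unfolding rU_def by simp
  qed (simp_all)
qed

lemma from_geo_M:
  assumes g: "geo_d U dM x y g"
  shows "dgeodesic VM EM g"
proof (rule dgeo_of_pos)
  show "g \<noteq> []" "set g \<subseteq> VM" using g U_sub unfolding geo_d_def by auto
  show "\<forall>i j. i \<le> j \<longrightarrow> j < length g \<longrightarrow> ddist VM EM (g ! i) (g ! j) = enat (j - i)"
  proof (intro allI impI)
    fix i j assume ij: "i \<le> j" "j < length g"
    have "g!i \<in> U" "g!j \<in> U" using g ij unfolding geo_d_def by auto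
    then show "ddist VM EM (g ! i) (g ! j) = enat (j - i)" using dM_fin geo_d_pos[OF g ij] by simp
  qed
qed

lemma rU_sym: "x \<in> U \<Longrightarrow> y \<in> U \<Longrightarrow> rU x y = rU y x"
proof -
  assume "x \<in> U" "y \<in> U"
  have "ddist U EU x y \<le> ddist U EU y x" "ddist U EU y x \<le> ddist U EU x y"
    by (rule ddist_sym, erule EU_sym)+
  then show ?thesis unfolding rU_def by simp
qed

lemma conv_ball:
  assumes "set p \<subseteq> U" "set q \<subseteq> U" "set r \<subseteq> U"
    and "set r \<subseteq> out_ball VM EM \<delta> (set p) \<union> in_ball VM EM \<delta> (set q)"
  shows "\<forall>v\<in>set r. \<exists>u\<in>set p \<union> set q. rU u v \<le> \<delta>"
proof
  fix v assume v: "v \<in> set r"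
  then have vU: "v \<in> U" using assms by auto
  from assms(4) v have "v \<in> out_ball VM EM \<delta> (set p) \<or> v \<in> in_ball VM EM \<delta> (set q)" by auto
  then show "\<exists>u\<in>set p \<union> set q. rU u v \<le> \<delta>"
  proof
    assume "v \<in> out_ball VM EM \<delta> (set p)"
    then obtain u where u: "u \<in> set p" "ddist VM EM u v \<le> enat \<delta>" unfolding out_ball_def by auto
    have uU: "u \<in> U" using u assms by auto
    have "dM u v \<le> \<delta>" using u dM_fin[OF uU vU] by simp
    then show ?thesis using rU_le_dM[OF uU vU] u by (intro bexI[of _ u]) auto
  next
    assume "v \<in> in_ball VM EM \<delta> (set q)"
    then obtain u where u: "u \<in> set q" "ddist VM EM v u \<le> enat \<delta>" unfolding in_ball_def by auto
    have uU: "u \<in> U" using u assms by auto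
    have "dM v u \<le> \<delta>" using u dM_fin[OF vU uU] by simp
    then show ?thesis using rU_le_dM[OF vU uU] rU_sym[OF uU vU] u by (intro bexI[of _ u]) auto
  qed
qed

lemma conv_ball_back:
  assumes "set p \<subseteq> U" "set q \<subseteq> U" "set r \<subseteq> U"
    and "\<forall>v\<in>set r. \<exists>u\<in>set p \<union> set q. rU u v \<le> D"
  shows "set r \<subseteq> out_ball U EU D (set p) \<union> in_ball U EU D (set q)"
proof
  fix v assume v: "v \<in> set r"
  then have vU: "v \<in> U" using assms by auto
  from assms(4) v obtain u where u: "u \<in> set p \<union> set q" "rU u v \<le> D" by blast
  have uU: "u \<in> U" using u assms by auto
  show "v \<in> out_ball U EU D (set p) \<union> in_ball U EU D (set q)"
  proof (cases "u \<in> set p")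
    case True
    have "ddist U EU u v \<le> enat D" using u(2) rU_fin[OF uU vU] by simp
    then have "v \<in> out_ball U EU D (set p)" using True vU unfolding out_ball_def by blast
    then show ?thesis by blast
  next
    case False
    then have uq: "u \<in> set q" using u by auto
    have "ddist U EU v u \<le> enat D" using u(2) rU_fin[OF vU uU] rU_sym[OF uU vU] by simp
    then have "v \<in> in_ball U EU D (set q)" using uq vU unfolding in_ball_def by blast
    then show ?thesis by blast
  qed
qed

lemma morse_inst: "\<exists>K. morse U dM rU K \<delta>"
proof -
  obtain K where K1: "K \<ge> 1" and K: "\<forall>u\<in>VM. \<forall>a\<in>T. ddist VM EM u (u \<otimes> a) \<le> enat K"
    using K_ex by blast
  have "morse U dM rU K \<delta>"
  proof
    show "1 \<le> K" by (rule K1)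
    fix x y assume x: "x \<in> U" and y: "y \<in> U"
    show "rU x y \<le> dM x y" using rU_le_dM[OF x y] .
    show "rU x y = rU y x" using rU_sym[OF x y] .
    show "dM x y \<le> K * rU x y"
    proof -
      obtain xs where xs: "dpath U EU xs" "hd xs = x" "last xs = y" "length xs = Suc (rU x y)"
        using ddist_path[OF rU_fin[OF x y]] by auto
      from pathK[OF K xs(1)] xs dM_fin[OF x y] show ?thesis by simp
    qed
    show "\<exists>g. geo_d U dM x y g"
    proof -
      obtain g where g: "dgeodesic VM EM g" "hd g = x" "last g = y" using dgeo_ex[OF dM_fin[OF x y]] by auto
      show ?thesis using to_geo_M[OF g(1)] g y by auto
    qed
    show "\<exists>P. geo_d U rU x y P"
    proof -
      obtain g where g: "dgeodesic U EU g" "hd g = x" "last g = y" using dgeo_ex[OF rU_fin[OF x y]] by auto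
      show ?thesis using to_geo_U[OF g(1)] g by auto
    qed
  next
    fix x assume x: "x \<in> U"
    then have "x \<in> VM" using U_sub by auto
    then have "ddist VM EM x x = 0" by (rule ddist_refl)
    then show "dM x x = 0" unfolding dM_def by (simp add: zero_enat_def)
    have "ddist U EU x x = 0" using x by (rule ddist_refl)
    then show "rU x x = 0" unfolding rU_def by (simp add: zero_enat_def)
  next
    fix x y z assume x: "x \<in> U" and y: "y \<in> U" and z: "z \<in> U"
    have "ddist U EU x z \<le> ddist U EU x y + ddist U EU y z" by (rule ddist_tri)
    then show "rU x z \<le> rU x y + rU y z" using rU_fin[OF x y] rU_fin[OF y z] rU_fin[OF x z] by simp
  next
    fix x y z p q r assume p: "geo_d U dM x y p" and q: "geo_d U dM y z q" and r: "geo_d U dM x z r"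
    have hl: "hd p = x" "last p = y" "hd q = y" "last q = z" "hd r = x" "last r = z"
      using geo_hd_last[OF p] geo_hd_last[OF q] geo_hd_last[OF r] by simp_all
    have gt: "geodesic_triangle VM EM p q r" unfolding geodesic_triangle_def
      using from_geo_M[OF p] from_geo_M[OF q] from_geo_M[OF r] hl by simp
    have th: "thin_triangle VM EM \<delta> p q r" using hyp gt unfolding strongly_hyperbolic_graph_def by blast
    have s: "set p \<subseteq> U" "set q \<subseteq> U" "set r \<subseteq> U" using geo_set[OF p] geo_set[OF q] geo_set[OF r] by simp_all
    have t: "set r \<subseteq> out_ball VM EM \<delta> (set p) \<union> in_ball VM EM \<delta> (set q) \<and>
       set p \<subseteq> out_ball VM EM \<delta> (set r) \<union> in_ball VM EM \<delta> (set q) \<and>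
       set q \<subseteq> out_ball VM EM \<delta> (set p) \<union> in_ball VM EM \<delta> (set r)"
      using th unfolding thin_triangle_def .
    note t1 = t[THEN conjunct1] and t2 = t[THEN conjunct2, THEN conjunct1] and t3 = t[THEN conjunct2, THEN conjunct2]
    show "(\<forall>v\<in>set r. \<exists>u\<in>set p \<union> set q. rU u v \<le> \<delta>) \<and>
          (\<forall>v\<in>set p. \<exists>u\<in>set r \<union> set q. rU u v \<le> \<delta>) \<and>
          (\<forall>v\<in>set q. \<exists>u\<in>set p \<union> set r. rU u v \<le> \<delta>)"
      using conv_ball[OF s(1,2,3) t1] conv_ball[OF s(3,2,1) t2] conv_ball[OF s(1,3,2) t3]
      by (intro conjI)
  qed
  then show ?thesis by blast
qed

lemma gen_units: "generate (units_of G) S = U"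
proof
  interpret UG: group "units_of G" by (rule units_group)
  show "generate (units_of G) S \<subseteq> U"
    using UG.generate_incl[of S] unfolding S_def by (simp add: units_of_carrier)
  show "U \<subseteq> generate (units_of G) S"
  proof
    fix m assume m: "m \<in> U"
    then have "m \<in> carrier G" using U_sub by auto
    from word[OF this] obtain ws where ws: "set ws \<subseteq> A" "m = foldr (\<lambda>a b. a \<otimes> b) ws \<one>" by auto
    have "set ws \<subseteq> A \<Longrightarrow> foldr (\<lambda>a b. a \<otimes> b) ws \<one> \<in> U \<Longrightarrow> foldr (\<lambda>a b. a \<otimes> b) ws \<one> \<in> generate (units_of G) S"
    proof (induction ws)
      case Nil
      show ?case using generate.one[of "units_of G" S] by (simp add: units_of_one)
    next
      case (Cons a ws)
      have ac: "a \<in> carrier G" using Cons A_sub by auto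
      have rc: "foldr (\<lambda>a b. a \<otimes> b) ws \<one> \<in> carrier G" using Cons A_sub by (intro foldr_closed) auto
      have "a \<otimes> foldr (\<lambda>a b. a \<otimes> b) ws \<one> \<in> U" using Cons.prems by simp
      from unit_factor[OF canc ac rc this] have u: "a \<in> U" "foldr (\<lambda>a b. a \<otimes> b) ws \<one> \<in> U" by auto
      have aS: "a \<in> S" unfolding S_def using u Cons.prems by auto
      have r: "foldr (\<lambda>a b. a \<otimes> b) ws \<one> \<in> generate (units_of G) S" using Cons.IH Cons.prems u by auto
      have "a \<otimes>\<^bsub>units_of G\<^esub> foldr (\<lambda>a b. a \<otimes> b) ws \<one> \<in> generate (units_of G) S"
        using generate.eng[OF generate.incl[OF aS] r] .
      then show ?case by (simp add: units_of_mult)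
    qed
    then show "m \<in> generate (units_of G) S" using ws m by simp
  qed
qed

theorem units_hyp: "hyperbolic_group (units_of G)"
proof -
  obtain K where "morse U dM rU K \<delta>" using morse_inst by blast
  then interpret m: morse U dM rU K \<delta> .
  obtain D where D: "\<forall>x y z p q r. geo_d U rU x y p \<longrightarrow> geo_d U rU y z q \<longrightarrow> geo_d U rU x z r \<longrightarrow>
     (\<forall>v\<in>set r. \<exists>u\<in>set p \<union> set q. rU u v \<le> D) \<and>
     (\<forall>v\<in>set p. \<exists>u\<in>set r \<union> set q. rU u v \<le> D) \<and>
     (\<forall>v\<in>set q. \<exists>u\<in>set p \<union> set r. rU u v \<le> D)" using m.final_thin by blast
  have shg: "strongly_hyperbolic_graph U EU D"
    unfolding strongly_hyperbolic_graph_def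
  proof (intro allI impI)
    fix p q r assume gt: "geodesic_triangle U EU p q r"
    then have g: "dgeodesic U EU p" "dgeodesic U EU q" "dgeodesic U EU r"
      and e: "last p = hd q" "hd r = hd p" "last r = last q" unfolding geodesic_triangle_def by auto
    have gp: "geo_d U rU (hd p) (hd q) p" using to_geo_U[OF g(1)] e by simp
    have gq: "geo_d U rU (hd q) (last q) q" using to_geo_U[OF g(2)] .
    have gr: "geo_d U rU (hd p) (last q) r" using to_geo_U[OF g(3)] e by simp
    have s: "set p \<subseteq> U" "set q \<subseteq> U" "set r \<subseteq> U" using gp gq gr unfolding geo_d_def by auto
    note c = D[rule_format, OF gp gq gr]
    show "thin_triangle U EU D p q r" unfolding thin_triangle_def
      using conv_ball_back[OF s(1,2,3) c[THEN conjunct1]] conv_ball_back[OF s(3,2,1) c[THEN conjunct2, THEN conjunct1]]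
        conv_ball_back[OF s(1,3,2) c[THEN conjunct2, THEN conjunct2]]
      by (intro conjI)
  qed
  show ?thesis unfolding hyperbolic_group_def
  proof (intro conjI exI)
    show "group (units_of G)" by (rule units_group)
    show "finite S" unfolding S_def using finA by simp
    show "S \<subseteq> carrier (units_of G)" unfolding S_def by (simp add: units_of_carrier)
    show "generate (units_of G) S = carrier (units_of G)" using gen_units by (simp add: units_of_carrier)
    show "strongly_hyperbolic_graph (carrier (units_of G)) (cayley_edge (units_of G) (S \<union> m_inv (units_of G) ` S)) D"
      using shg unfolding T_def by (simp add: units_of_carrier)
  qed
qed

end

theorem corollary4p10:
  fixes M :: "('a, 'b) monoid_scheme"
  assumes "monoid M"
    and "cancellative M"
    and "strongly_hyperbolic_monoid M"
  shows "hyperbolic_group (units_of M)"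
proof -
  obtain A \<delta> where "finite A" "monoid_generates M A" "strongly_hyperbolic_graph (carrier M) (cayley_edge M A) \<delta>"
    using assms(3) unfolding strongly_hyperbolic_monoid_def by blast
  then have "conc M A \<delta>" using assms(1,2) by (intro conc.intro conc_axioms.intro)
  then interpret conc M A \<delta> .
  show ?thesis by (rule units_hyp)
qed


end
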